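(* In the setting of the context, for the iterates of ARDCA started at any $u^0\in\mathbb{D}$, we have $z^k\in\mathbb{D}$, $u^k\in\mathbb{D}$ and $v^k\in\mathbb{D}$ for all $k\ge0$ (for every realization of the random indices).
   Context: Integers $n,t\ge1$, $p,m\ge0$, $\widehat n=n+p+m$, $\mathbb{D}=\{u\in\mathbb{R}^{\widehat n}:u_{n+p+1},\dots,u_{\widehat n}\ge0\}$. Data $A\in\mathbb{R}^{t\times n}$ (columns $A_j$), $B\in\mathbb{R}^{p\times t}$ (rows $B_{j,:}$), $b\in\mathbb{R}^p$, $\mu$-strongly convex $f:\mathbb{R}^t\to\mathbb{R}$, convex $M$-Lipschitz $\phi_i:\mathbb{R}\to\mathbb{R}$ ($i\le n$), convex $g_i:\mathbb{R}^t\to\mathbb{R}$ ($i\le m$) with subgradients bounded in norm by $L_{g_i}$. $L_f(x,u)=f(x)+\langle u_{1:n},A^Tx/n\rangle+\langle u_{n+1:n+p},Bx+b\rangle+\sum_iu_{n+p+i}g_i(x)$, $x^*(u)=\arg\min_xL_f(x,u)$, $d(u)=-L_f(x^*(u),u)$, differentiable on $\mathbb{D}$ with gradient $-[(A^Tx^*(u)/n)^T,(Bx^*(u)+b)^T,g_1(x^*(u)),\dots,g_m(x^*(u))]^T$. $h_i=\frac1n\phi_i^*$ for $i\le n$, $h_i\equiv0$ for $n<i\le n+p$, $h_i(s)=0$ if $s\ge0$ and $+\infty$ else for $i>n+p$. $L_j=\|A_j\|^2/(n^2\mu)$ ($j\le n$), $\|B_{j-n,:}\|^2/\mu$ ($n<j\le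 n+p$), $L_{g_{j-n-p}}^2/\mu$ ($j>n+p$). ARDCA: $\theta_0=1/\widehat n$, $\theta_{k+1}=\frac{\sqrt{\theta_k^4+4\theta_k^2}-\theta_k^2}{2}$; $z^0=u^0$; for $k\ge0$: $v^k=\theta_kz^k+(1-\theta_k)u^k$; $i_k$ uniform on $\{1,\dots,\widehat n\}$; $z^{k+1}_{i_k}=\arg\min_{w\in\mathbb{R}}\widehat n\theta_kL_{i_k}(w-z^k_{i_k})^2+\nabla_{i_k}d(v^k)(w-z^k_{i_k})+h_{i_k}(w)$, $z^{k+1}_j=z^k_j$ ($j\ne i_k$); $u^{k+1}=v^k+\widehat n\theta_k(z^{k+1}-z^k)$. *)

theory Defs
  imports "HOL-Analysis.Analysis"
begin

definition strongly_convex :: "real \<Rightarrow> ('a::real_inner \<Rightarrow> real) \<Rightarrow> bool" where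
  "strongly_convex mu f \<longleftrightarrow> (\<forall>x y. \<forall>l::real. 0 \<le> l \<and> l \<le> 1 \<longrightarrow>
     f (l *\<^sub>R x + (1 - l) *\<^sub>R y) \<le> l * f x + (1 - l) * f y - mu / 2 * l * (1 - l) * (norm (x - y))\<^sup>2)"

definition is_subgrad :: "('a::real_inner \<Rightarrow> real) \<Rightarrow> 'a \<Rightarrow> 'a \<Rightarrow> bool" where
  "is_subgrad g x s \<longleftrightarrow> (\<forall>y. g y \<ge> g x + s \<bullet> (y - x))"

definition fconj :: "(real \<Rightarrow> real) \<Rightarrow> real \<Rightarrow> ereal" where
  "fconj phi s = (SUP x. ereal (s * x - phi x))"

(* dual vectors u in R^{nhat}, represented as nat => real with coordinates 1..nhat *)
definition domD :: "nat \<Rightarrow> nat \<Rightarrow> nat \<Rightarrow> (nat \<Rightarrow> real) set" where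
  "domD n p m = {u. \<forall>j\<in>{n+p+1..n+p+m}. 0 \<le> u j}"

(* Lagrangian L_f(x,u); A j = column A_j (j=1..n), B j = row B_{j,:} (j=1..p) *)
definition Lag :: "nat \<Rightarrow> nat \<Rightarrow> nat \<Rightarrow> ('t::real_inner \<Rightarrow> real) \<Rightarrow> (nat \<Rightarrow> 't) \<Rightarrow> (nat \<Rightarrow> 't)
     \<Rightarrow> (nat \<Rightarrow> real) \<Rightarrow> (nat \<Rightarrow> 't \<Rightarrow> real) \<Rightarrow> 't \<Rightarrow> (nat \<Rightarrow> real) \<Rightarrow> real" where
  "Lag n p m f A B b g x u = f x + (\<Sum>j=1..n. u j * ((A j \<bullet> x) / real n))
     + (\<Sum>j=1..p. u (n+j) * (B j \<bullet> x + b j)) + (\<Sum>j=1..m. u (n+p+j) * g j x)"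

definition xstar where
  "xstar n p m f A B b g u = (SOME x. \<forall>y. Lag n p m f A B b g x u \<le> Lag n p m f A B b g y u)"

definition grad_d where
  "grad_d n p m f A B b g u j =
     (let x = xstar n p m f A B b g u in
      if j \<le> n then - ((A j \<bullet> x) / real n)
      else if j \<le> n + p then - (B (j - n) \<bullet> x + b (j - n))
      else - g (j - n - p) x)"

definition hfun :: "nat \<Rightarrow> nat \<Rightarrow> (nat \<Rightarrow> real \<Rightarrow> real) \<Rightarrow> nat \<Rightarrow> real \<Rightarrow> ereal" where
  "hfun n p phi i s =
     (if i \<le> n then ereal (1 / real n) * fconj (phi i) s
      else if i \<le> n + p then 0
      else (if 0 \<le> s then 0 else \<infinity>))"

definition Lconst :: "nat \<Rightarrow> nat \<Rightarrow> real \<Rightarrow> (nat \<Rightarrow> 't::real_inner) \<Rightarrow> (nat \<Rightarrow> 't) \<Rightarrow> (nat \<Rightarrow> real) \<Rightarrow> nat \<Rightarrow> real" where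
  "Lconst n p mu A B Lg j =
     (if j \<le> n then (norm (A j))\<^sup>2 / ((real n)\<^sup>2 * mu)
      else if j \<le> n + p then (norm (B (j - n)))\<^sup>2 / mu
      else (Lg (j - n - p))\<^sup>2 / mu)"

primrec theta :: "nat \<Rightarrow> nat \<Rightarrow> real" where
  "theta nh 0 = 1 / real nh"
| "theta nh (Suc k) = (sqrt (theta nh k ^ 4 + 4 * theta nh k ^ 2) - theta nh k ^ 2) / 2"

(* ARDCA iterates z, u, v driven by the index sequence ik (one realization);
   z^{k+1}_{i_k} is required to be a minimizer of the coordinate subproblem *)
definition ardca :: "nat \<Rightarrow> nat \<Rightarrow> nat \<Rightarrow> (nat \<Rightarrow> real) \<Rightarrow> (nat \<Rightarrow> real \<Rightarrow> ereal) \<Rightarrow> ((nat \<Rightarrow> real) \<Rightarrow> nat \<Rightarrow> real)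
     \<Rightarrow> (nat \<Rightarrow> nat) \<Rightarrow> (nat \<Rightarrow> nat \<Rightarrow> real) \<Rightarrow> (nat \<Rightarrow> nat \<Rightarrow> real) \<Rightarrow> (nat \<Rightarrow> nat \<Rightarrow> real) \<Rightarrow> bool" where
  "ardca n p m L h grad ik z u v \<longleftrightarrow>
     (let nh = n + p + m in
      z 0 = u 0 \<and>
      (\<forall>k. v k = (\<lambda>j. theta nh k * z k j + (1 - theta nh k) * u k j)) \<and>
      (\<forall>k. \<forall>j. j \<noteq> ik k \<longrightarrow> z (Suc k) j = z k j) \<and>
      (\<forall>k. \<forall>w. ereal (real nh * theta nh k * L (ik k) * (z (Suc k) (ik k) - z k (ik k))\<^sup>2
                 + grad (v k) (ik k) * (z (Suc k) (ik k) - z k (ik k))) + h (ik k) (z (Suc k) (ik k))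
             \<le> ereal (real nh * theta nh k * L (ik k) * (w - z k (ik k))\<^sup>2
                 + grad (v k) (ik k) * (w - z k (ik k))) + h (ik k) w) \<and>
      (\<forall>k. u (Suc k) = (\<lambda>j. v k j + real nh * theta nh k * (z (Suc k) j - z k j))))"

end

theory Submission
  imports Defs
begin

lemma theta_next:
  fixes t x :: real
  assumes "t > 0" "x = (sqrt (t ^ 4 + 4 * t ^ 2) - t ^ 2) / 2"
  shows "x > 0" "x < t" "x^2 = t^2 * (1 - x)"
proof -
  have sq: "(sqrt (t ^ 4 + 4 * t ^ 2))^2 = t ^ 4 + 4 * t ^ 2" by (simp add: add_nonneg_nonneg)
  have t4: "t^4 = (t^2)^2" by simp
  have "(t^2)^2 < t ^ 4 + 4 * t ^ 2" using assms(1) t4 by simp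
  then have "sqrt ((t^2)^2) < sqrt (t ^ 4 + 4 * t ^ 2)"
    by (intro real_sqrt_less_mono)
  moreover have "sqrt ((t^2)^2) = t^2" by (rule real_sqrt_unique) auto
  ultimately have a: "sqrt (t ^ 4 + 4 * t ^ 2) > t^2" by linarith
  have "(t^2 + 2*t)^2 = t^4 + 4*t^2 + 4*t^3" by (simp add: power2_eq_square power3_eq_cube t4 algebra_simps)
  then have "t ^ 4 + 4 * t ^ 2 < (t^2 + 2*t)^2" using assms(1) by simp
  then have "sqrt (t ^ 4 + 4 * t ^ 2) < sqrt ((t^2 + 2*t)^2)"
    by (intro real_sqrt_less_mono)
  moreover have "sqrt ((t^2 + 2*t)^2) = t^2 + 2*t" using assms(1) by (intro real_sqrt_unique) auto
  ultimately have b: "sqrt (t ^ 4 + 4 * t ^ 2) < t^2 + 2*t" by linarith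
  show "x > 0" using a assms(2) by simp
  show "x < t" using b assms(2) by simp
  define w where "w = sqrt (t ^ 4 + 4 * t ^ 2)"
  have e1: "x^2 = (w ^ 2 - 2 * w * t ^ 2 + t ^ 4) / 4" unfolding assms(2) w_def[symmetric] by (simp add: power2_eq_square field_simps power4_eq_xxxx)
  have "w ^ 2 = t ^ 4 + 4 * t ^ 2" using sq w_def by simp
  then have e2: "(w ^ 2 - 2 * w * t ^ 2 + t ^ 4) / 4 = t^2 * (1 - x)" unfolding assms(2) w_def[symmetric]
    by (simp add: field_simps)
  show "x^2 = t^2 * (1 - x)" using e1 e2 by simp
qed

lemma theta_bounds:
  assumes "real nh \<ge> 1"
  shows "0 < theta nh k \<and> theta nh k \<le> 1 / real nh"
proof (induction k)
  case 0
  then show ?case using assms by simp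
next
  case (Suc k)
  then show ?case using theta_next[of "theta nh k" "theta nh (Suc k)"] by simp
qed

lemma theta_cond:
  assumes N: "real nh \<ge> 1"
  shows "real nh * theta nh k * (1 - theta nh (Suc k)) \<ge> (real nh - 1) * theta nh (Suc k)"
proof -
  define t where "t = theta nh k"
  define x where "x = theta nh (Suc k)"
  define N where "N = real nh"
  have t: "0 < t" "t \<le> 1 / N" using theta_bounds[OF N, of k] unfolding t_def N_def by auto
  have x: "x > 0" "x < t" "x^2 = t^2 * (1 - x)"
    using theta_next[of t x] t by (simp_all add: t_def x_def)
  have N1: "N \<ge> 1" using N N_def by simp
  have tN: "t * N \<le> 1" using t N1 by (simp add: field_simps)
  have key: "N * x \<ge> (N - 1) * t"
  proof (rule ccontr)
    assume "\<not> ?thesis"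
    then have lt: "N * x < (N - 1) * t" by simp
    have "(N*x)^2 < ((N-1)*t)^2"
      using lt x(1) N1 by (intro power_strict_mono) auto
    then have "N^2 * t^2 * (1 - x) < (N-1)^2 * t^2" using x(3) by (simp add: power_mult_distrib)
    then have "N^2 * (1 - x) < (N-1)^2" using t(1) by (simp add: mult.commute mult.left_commute)
    then have "N^2 * x > 2*N - 1" by (simp add: power2_eq_square algebra_simps)
    moreover have "N^2 * x < N"
    proof -
      have "N * x < N * t" using x(2) N1 by simp
      also have "N * t \<le> 1" using tN by (simp add: mult.commute)
      finally have "N * (N * x) < N * 1" using N1 by simp
      then show ?thesis by (simp add: power2_eq_square mult.assoc)
    qed
    ultimately show False using N1 by linarith
  qed
  have "N * t * (1 - x) * t = N * (t^2 * (1 - x))" by (simp add: power2_eq_square algebra_simps)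
  also have "... = N * x^2" using x(3) by simp
  also have "N * x^2 = (N*x) * x" by (simp add: power2_eq_square)
  also have "... \<ge> ((N - 1) * t) * x" using key x(1) by (intro mult_right_mono) auto
  finally have "(N * t * (1 - x)) * t \<ge> ((N - 1) * x) * t" by (simp add: algebra_simps)
  then have "N * t * (1 - x) \<ge> (N - 1) * x" using t(1) by (simp add: ac_simps)
  then show ?thesis by (simp add: N_def t_def x_def)
qed


lemma theta_le1:
  assumes "real nh \<ge> 1"
  shows "0 < theta nh k" "theta nh k \<le> 1"
proof -
  have "1 / real nh \<le> 1" using assms by simp
  then show "0 < theta nh k" "theta nh k \<le> 1" using theta_bounds[OF assms, of k] by auto
qed

theorem lemma3:
  fixes n p m :: nat and mu M :: real
    and A :: "nat \<Rightarrow> real^'t" and B :: "nat \<Rightarrow> real^'t" and b :: "nat \<Rightarrow> real"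
    and f :: "real^'t \<Rightarrow> real" and phi :: "nat \<Rightarrow> real \<Rightarrow> real"
    and g :: "nat \<Rightarrow> real^'t \<Rightarrow> real" and Lg :: "nat \<Rightarrow> real"
    and ik :: "nat \<Rightarrow> nat" and z u v :: "nat \<Rightarrow> nat \<Rightarrow> real"
  assumes "n \<ge> 1"
    and "mu > 0" and "strongly_convex mu f"
    and "\<And>i. i \<in> {1..n} \<Longrightarrow> convex_on UNIV (phi i) \<and> M-lipschitz_on UNIV (phi i)"
    and "\<And>i. i \<in> {1..m} \<Longrightarrow> convex_on UNIV (g i)"
    and "\<And>i x s. i \<in> {1..m} \<Longrightarrow> is_subgrad (g i) x s \<Longrightarrow> norm s \<le> Lg i"
    and "\<And>k. ik k \<in> {1..n+p+m}"
    and "u 0 \<in> domD n p m"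
    and "ardca n p m (Lconst n p mu A B Lg) (hfun n p phi) (grad_d n p m f A B b g) ik z u v"
  shows "\<forall>k. z k \<in> domD n p m \<and> u k \<in> domD n p m \<and> v k \<in> domD n p m"
proof -
  define nh where "nh = n + p + m"
  define N where "N = real nh"
  define L where "L = Lconst n p mu A B Lg"
  define h where "h = hfun n p phi"
  define gr where "gr = grad_d n p m f A B b g"
  have N1: "N \<ge> 1" using assms(1) by (simp add: N_def nh_def)
  have A0: "z 0 = u 0"
    and Av: "\<And>k. v k = (\<lambda>j. theta nh k * z k j + (1 - theta nh k) * u k j)"
    and Az: "\<And>k j. j \<noteq> ik k \<Longrightarrow> z (Suc k) j = z k j"
    and Amin: "\<And>k w. ereal (real nh * theta nh k * L (ik k) * (z (Suc k) (ik k) - z k (ik k))\<^sup>2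
                 + gr (v k) (ik k) * (z (Suc k) (ik k) - z k (ik k))) + h (ik k) (z (Suc k) (ik k))
             \<le> ereal (real nh * theta nh k * L (ik k) * (w - z k (ik k))\<^sup>2
                 + gr (v k) (ik k) * (w - z k (ik k))) + h (ik k) w"
    and Au: "\<And>k. u (Suc k) = (\<lambda>j. v k j + real nh * theta nh k * (z (Suc k) j - z k j))"
    using assms(9) unfolding ardca_def Let_def nh_def[symmetric] L_def[symmetric] h_def[symmetric]
      gr_def[symmetric] by blast+
  have main: "z k j \<ge> 0 \<and> u k j \<ge> 0 \<and> (1 - theta nh k) * u k j + (1 - N) * theta nh k * z k j \<ge> 0"
    if j: "j \<in> {n+p+1..n+p+m}" for j k
  proof (induction k)
    case 0
    have "u 0 j \<ge> 0" using assms(8) j by (simp add: domD_def)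
    moreover have "(1 - theta nh 0) * u 0 j + (1 - N) * theta nh 0 * z 0 j = 0"
      using N1 by (simp add: A0 N_def field_simps)
    ultimately show ?case using A0 by simp
  next
    case (Suc k)
    define t where "t = theta nh k"
    define x where "x = theta nh (Suc k)"
    have t: "0 < t" "t \<le> 1" using theta_le1[of nh k] N1 unfolding N_def t_def by auto
    have x: "0 < x" "x \<le> 1" using theta_le1[of nh "Suc k"] N1 unfolding N_def x_def by auto
    have C: "N * t * (1 - x) \<ge> (N - 1) * x" using theta_cond[of nh k] N1
      unfolding N_def t_def x_def by simp
    have IH: "z k j \<ge> 0" "u k j \<ge> 0" "(1 - t) * u k j + (1 - N) * t * z k j \<ge> 0"
      using Suc t_def by auto
    have zS: "z (Suc k) j \<ge> 0"
    proof (cases "j = ik k")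
      case True
      have hj: "\<And>s. h j s = (if 0 \<le> s then 0 else \<infinity>)" using j by (simp add: h_def hfun_def)
      show ?thesis
      proof (rule ccontr)
        assume "\<not> ?thesis"
        then have "h j (z (Suc k) j) = \<infinity>" using hj by simp
        moreover have "h j 0 = 0" using hj by simp
        ultimately show False using Amin[of k 0] True by simp
      qed
    next
      case False
      then show ?thesis using Az IH by simp
    qed
    have uS: "u (Suc k) j \<ge> N * t * z (Suc k) j"
    proof (cases "j = ik k")
      case True
      have "u (Suc k) j = ((1 - t) * u k j + (1 - N) * t * z k j) + N * t * z (Suc k) j"
        using Au Av by (simp add: t_def N_def algebra_simps)
      then show ?thesis using IH by simp
    next
      case False
      have "u (Suc k) j = t * z k j + (1 - t) * u k j"
        using Au Av Az[OF False] by (simp add: t_def)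
      moreover have "z (Suc k) j = z k j" using Az[OF False] .
      ultimately have "u (Suc k) j - N * t * z (Suc k) j = (1 - t) * u k j + (1 - N) * t * z k j"
        by (simp add: algebra_simps)
      then show ?thesis using IH by linarith
    qed
    have "N * t * z (Suc k) j \<ge> 0" using N1 t zS by simp
    then have u0: "u (Suc k) j \<ge> 0" using uS by linarith
    have "(1 - x) * u (Suc k) j \<ge> (1 - x) * (N * t * z (Suc k) j)"
      using uS x by (intro mult_left_mono) auto
    moreover have "(N * t * (1 - x)) * z (Suc k) j \<ge> ((N - 1) * x) * z (Suc k) j"
      using C zS by (intro mult_right_mono) auto
    ultimately have "(1 - x) * u (Suc k) j + (1 - N) * x * z (Suc k) j \<ge> 0"
      by (simp add: algebra_simps)
    then show ?case using zS u0 x_def by simp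
  qed
  show ?thesis
  proof (intro allI conjI)
    fix k
    show "z k \<in> domD n p m" "u k \<in> domD n p m" using main by (auto simp: domD_def)
    show "v k \<in> domD n p m" unfolding domD_def
    proof (intro CollectI ballI)
      fix j assume j: "j \<in> {n+p+1..n+p+m}"
      have t: "0 < theta nh k" "theta nh k \<le> 1" using theta_le1[of nh k] N1 unfolding N_def by auto
      show "0 \<le> v k j" using main[OF j, of k] t by (simp add: Av)
    qed
  qed
qed


end
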